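(* Let $0<p\le q\le 1$ and define $f\colon(0,\infty)\to\mathbb{R}$ by \[ f(t)=\frac{p}{q}\cdot\frac{t^q-1}{t^p-1}\quad (t>0,\ t\neq 1),\qquad f(1)=1. \] Then for every $t>0$, \[ f(t)=\frac{p}{q}+\frac{p}{q}\int_0^\infty\frac{t}{\lambda (t+\lambda)}\cdot \frac{\lambda^{p+q}\sin((q-p)\pi) - \lambda^q\sin(q\pi) + \lambda^p\sin(p\pi)}{\pi(\lambda^{2p}-2\lambda^p\cos(p\pi)+1)}\,d\lambda . \] *)

theory Defs
  imports "HOL-Analysis.Analysis"
begin

definition fpq :: "real \<Rightarrow> real \<Rightarrow> real \<Rightarrow> real" where
  "fpq p q t = (if t = 1 then 1 else (p / q) * ((t powr q - 1) / (t powr p - 1)))"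

definition kernel_pq :: "real \<Rightarrow> real \<Rightarrow> real \<Rightarrow> real \<Rightarrow> real" where
  "kernel_pq p q t l =
     t / (l * (t + l)) *
     ((l powr (p + q) * sin ((q - p) * pi) - l powr q * sin (q * pi) + l powr p * sin (p * pi))
      / (pi * (l powr (2 * p) - 2 * l powr p * cos (p * pi) + 1)))"

end

theory Submission
  imports Defs "HOL-Complex_Analysis.Complex_Analysis"
begin


definition Ef :: "real \<Rightarrow> complex \<Rightarrow> complex" where
  "Ef a w = (if w = 0 then of_real a else (exp (of_real a * w) - 1) / w)"

lemma Ef_holo: "Ef a holomorphic_on UNIV"
proof -
  have d: "deriv (\<lambda>w. exp (of_real a * w)) 0 = of_real a"
    by (rule DERIV_imp_deriv) (auto intro!: derivative_eq_intros)
  have "(\<lambda>z. if z = 0 then deriv (\<lambda>w. exp (of_real a * w)) 0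
        else (exp (of_real a * z) - exp (of_real a * 0)) / (z - 0)) holomorphic_on UNIV"
    by (rule pole_lemma) (auto intro!: holomorphic_intros)
  also have "(\<lambda>z. if z = 0 then deriv (\<lambda>w. exp (of_real a * w)) 0
        else (exp (of_real a * z) - exp (of_real a * 0)) / (z - 0)) = Ef a"
    by (auto simp: Ef_def d fun_eq_iff)
  finally show ?thesis .
qed

definition Qf :: "real \<Rightarrow> complex \<Rightarrow> complex" where
  "Qf s w = (if w = of_real s then exp (of_real s) else (exp w - exp (of_real s)) / (w - of_real s))"

lemma Qf_holo: "Qf s holomorphic_on UNIV"
proof -
  have d: "deriv exp (of_real s) = exp (of_real s :: complex)"
    by (rule DERIV_imp_deriv) (rule DERIV_exp)
  have "(\<lambda>z. if z = of_real s then deriv exp (of_real s)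
        else (exp z - exp (of_real s)) / (z - of_real s)) holomorphic_on UNIV"
    by (rule pole_lemma) (auto intro!: holomorphic_intros)
  also have "(\<lambda>z. if z = of_real s then deriv exp (of_real s)
        else (exp z - exp (of_real s)) / (z - of_real s)) = Qf s"
    by (auto simp: Qf_def d fun_eq_iff)
  finally show ?thesis .
qed

definition Sr :: "complex set" where "Sr = {w. \<bar>Im w\<bar> < 3 * pi / 2}"

lemma Sr_convex: "convex Sr"
proof -
  have "Sr = {w. Im w < 3*pi/2} \<inter> {w. Im w > - (3*pi/2)}" by (auto simp: Sr_def)
  thus ?thesis by (metis convex_Int convex_halfspace_Im_lt convex_halfspace_Im_gt)
qed

lemma Sr_open: "open Sr"
proof -
  have "Sr = {w. Im w < 3*pi/2} \<inter> {w. Im w > - (3*pi/2)}" by (auto simp: Sr_def)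
  thus ?thesis by (metis open_Int open_halfspace_Im_lt open_halfspace_Im_gt)
qed

lemma Ef_nz: assumes "0 < p" "p \<le> 1" "w \<in> Sr" shows "Ef p w \<noteq> 0"
proof
  assume h: "Ef p w = 0"
  have "w \<noteq> 0" using h assms by (auto simp: Ef_def)
  hence "exp (of_real p * w) = 1" using h by (auto simp: Ef_def)
  then obtain n :: int where n: "Re (of_real p * w) = 0" "Im (of_real p * w) = of_int (2*n) * pi"
    by (auto simp: exp_eq_1)
  have re: "Re w = 0" using n(1) assms by simp
  have "Im w \<noteq> 0" using re \<open>w \<noteq> 0\<close> complex_eq_iff by force
  hence "n \<noteq> 0" using n(2) assms by auto
  hence "\<bar>of_int n\<bar> \<ge> (1::real)" by linarith
  have "\<bar>p * Im w\<bar> = 2 * \<bar>of_int n\<bar> * pi" using n(2) by (simp add: abs_mult)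
  also have "\<dots> \<ge> 2 * pi" using \<open>\<bar>of_int n\<bar> \<ge> 1\<close> by (simp add: pi_gt_zero)
  finally have "2 * pi \<le> p * \<bar>Im w\<bar>" using assms by (simp add: abs_mult)
  also have "\<dots> \<le> \<bar>Im w\<bar>" using assms by (simp add: mult_left_le_one_le)
  finally show False using assms(3) pi_gt_zero by (simp add: Sr_def)
qed

lemma Qf_nz: assumes "w \<in> Sr" shows "Qf s w \<noteq> 0"
proof
  assume h: "Qf s w = 0"
  have "w \<noteq> of_real s" using h by (auto simp: Qf_def)
  hence "exp w = exp (of_real s)" using h by (auto simp: Qf_def)
  hence "exp (w - of_real s) = 1" by (simp add: exp_diff)
  then obtain n :: int where n: "Re (w - of_real s) = 0" "Im (w - of_real s) = of_int (2*n) * pi"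
    by (auto simp: exp_eq_1)
  have "Im w \<noteq> 0" using n(1) \<open>w \<noteq> of_real s\<close> complex_eq_iff by force
  hence "n \<noteq> 0" using n(2) by auto
  hence "\<bar>of_int n\<bar> \<ge> (1::real)" by linarith
  have "\<bar>Im w\<bar> = 2 * \<bar>of_int n\<bar> * pi" using n(2) by (simp add: abs_mult)
  also have "\<dots> \<ge> 2 * pi" using \<open>\<bar>of_int n\<bar> \<ge> 1\<close> by (simp add: pi_gt_zero)
  finally show False using assms pi_gt_zero by (simp add: Sr_def)
qed

definition Hc :: "real \<Rightarrow> real \<Rightarrow> complex \<Rightarrow> complex" where
  "Hc p q w = exp (of_real p * w) * Ef (q - p) w / Ef p w"

definition Gf :: "real \<Rightarrow> real \<Rightarrow> real \<Rightarrow> complex \<Rightarrow> complex" where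
  "Gf p q t w = (exp (of_real q * w) - exp (of_real p * w)) / (exp (of_real p * w) - 1)
                 * of_real t / (exp w - of_real t)"

lemma Hc_nz_eq: assumes "w \<noteq> 0" shows "Hc p q w = (exp (of_real q * w) - exp (of_real p * w)) / (exp (of_real p * w) - 1)"
proof -
  have gen: "a * (x / w) / (y / w) = a * x / (y::complex)" for a x y
    using assms by (cases "y=0") (simp_all add: field_simps)
  have e: "exp (of_real p * w) * exp (of_real (q - p) * w) = exp (of_real q * w)"
    by (subst mult_exp_exp) (simp add: algebra_simps)
  have "Hc p q w = exp (of_real p * w) * (exp (of_real (q - p) * w) - 1) / (exp (of_real p * w) - 1)"
    using assms by (simp add: Hc_def Ef_def gen)
  also have "\<dots> = (exp (of_real q * w) - exp (of_real p * w)) / (exp (of_real p * w) - 1)"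
    unfolding right_diff_distrib mult_1_right e by (rule refl)
  finally show ?thesis .
qed


lemma expc: "exp (of_real a * Complex x y) = Complex (exp (a*x) * cos (a*y)) (exp (a*x) * sin (a*y))"
proof -
  have "of_real a * Complex x y = Complex (a*x) (a*y)" by (simp add: complex_eq_iff)
  hence "exp (of_real a * Complex x y) = of_real (exp (a*x)) * Complex (cos (a*y)) (sin (a*y))"
    by (simp only: exp_Complex)
  thus ?thesis by (simp add: complex_eq_iff)
qed

lemma Im_z: fixes a b cP sP cQ sQ :: real
  assumes "cP^2 + sP^2 = 1"
  shows "Im ((Complex (b * cQ) (b * sQ) - Complex (a * cP) (a * sP)) / (Complex (a * cP) (a * sP) - 1))
     = (a * b*(sQ * cP - cQ * sP) - b * sQ + a * sP)/(a^2 - 2 * a * cP + 1)"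
proof -
  let ?X = "Complex (b * cQ) (b * sQ) - Complex (a * cP) (a * sP)"
  let ?Y = "Complex (a * cP) (a * sP) - 1"
  have "Im (?X / ?Y) = (Im ?X * Re ?Y - Re ?X * Im ?Y) / ((Re ?Y)^2 + (Im ?Y)^2)" by (rule Im_divide)
  also have "Im ?X * Re ?Y - Re ?X * Im ?Y = a * b * (sQ * cP - cQ * sP) - b * sQ + a * sP"
    by (simp add: algebra_simps)
  also have "(Re ?Y)^2 + (Im ?Y)^2 = a^2 * (cP^2 + sP^2) - 2 * a * cP + 1"
    by (simp add: power2_eq_square algebra_simps)
  finally show ?thesis using assms by simp
qed

lemma Gf_diff:
  fixes p q t x :: real
  assumes "0 < t"
  shows "Gf p q t (Complex x (-pi)) - Gf p q t (Complex x pi)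
       = 2 * pi * \<i> * of_real (exp x * kernel_pq p q t (exp x))"
proof -
  define z where "z = (exp (of_real q * Complex x pi) - exp (of_real p * Complex x pi)) / (exp (of_real p * Complex x pi) - 1)"
  have cj: "cnj (Complex x pi) = Complex x (-pi)" by (simp add: complex_eq_iff)
  have e1: "exp (Complex x pi) = - of_real (exp x)" "exp (Complex x (-pi)) = - of_real (exp x)"
    by (simp_all add: exp_Complex complex_eq_iff)
  have zm: "(exp (of_real q * Complex x (-pi)) - exp (of_real p * Complex x (-pi))) / (exp (of_real p * Complex x (-pi)) - 1) = cnj z"
    unfolding z_def cj[symmetric] by (simp add: exp_cnj)
  have "Gf p q t (Complex x (-pi)) - Gf p q t (Complex x pi) = - (cnj z - z) * of_real (t / (exp x + t))"
  proof -
    have ex: "exp x + t > 0" using assms exp_gt_zero[of x] by linarith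
    have nz: "complex_of_real (exp x) + complex_of_real t \<noteq> 0" "- complex_of_real (exp x) - complex_of_real t \<noteq> 0"
      "complex_of_real t + complex_of_real (exp x) \<noteq> 0"
      using ex by (auto simp: complex_eq_iff)
    have m: "- complex_of_real (exp x) - complex_of_real t = - of_real (exp x + t)" by simp
    have tt: "complex_of_real t / (- complex_of_real (exp x) - complex_of_real t) = - of_real (t / (exp x + t))"
      unfolding m by (metis divide_minus_right of_real_divide)
    have "Gf p q t (Complex x (-pi)) - Gf p q t (Complex x pi) = (cnj z - z) * (complex_of_real t / (- complex_of_real (exp x) - complex_of_real t))"
      unfolding Gf_def zm z_def[symmetric] e1 by (simp add: divide_inverse algebra_simps)
    thus ?thesis unfolding tt by (simp add: divide_inverse algebra_simps)
  qed
  also have "cnj z - z = - (of_real (2 * Im z) * \<i>)"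
    using complex_diff_cnj[of z] by (simp add: algebra_simps)
  finally have G: "Gf p q t (Complex x (-pi)) - Gf p q t (Complex x pi) = of_real (2 * Im z * (t / (exp x + t))) * \<i>"
    by simp
  define a where "a = exp x powr p"
  define b where "b = exp x powr q"
  have a': "exp (p * x) = a" "exp (q*x) = b" by (simp_all add: a_def b_def powr_def)
  have "z = (Complex (b* cos (q*pi)) (b* sin (q*pi)) - Complex (a* cos (p*pi)) (a* sin (p*pi))) / (Complex (a* cos (p*pi)) (a* sin (p*pi)) - 1)"
    by (simp add: z_def expc a')
  hence Imz: "Im z = (a*b*(sin (q*pi)* cos (p*pi) - cos (q*pi)* sin (p*pi)) - b* sin (q*pi) + a* sin (p*pi))/(a^2 - 2*a* cos (p*pi) + 1)"
    using Im_z[where a=a and b=b and cP="cos (p*pi)" and sP="sin (p*pi)" and cQ="cos (q*pi)" and sQ="sin (q*pi)"]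
    by simp
  have ab: "exp x powr (p + q) = a * b" "exp x powr (2 * p) = a^2"
    unfolding a_def b_def power2_eq_square by (simp_all only: mult_2 powr_add)
  have k: "kernel_pq p q t (exp x) = t / (exp x * (t + exp x)) *
     ((a * b * sin ((q - p) * pi) - b * sin (q * pi) + a * sin (p * pi))
      / (pi * (a^2 - 2 * a * cos (p * pi) + 1)))"
    unfolding kernel_pq_def ab by (simp add: a_def b_def)
  have sd: "sin ((q - p) * pi) = sin (q*pi)* cos (p*pi) - cos (q*pi)* sin (p*pi)"
    by (simp add: left_diff_distrib sin_diff)
  have "2 * Im z * (t / (exp x + t)) = 2 * pi * (exp x * kernel_pq p q t (exp x))"
  proof -
    define N where "N = a * b * sin ((q - p) * pi) - b * sin (q * pi) + a * sin (p * pi)"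
    define D where "D = a^2 - 2 * a * cos (p * pi) + 1"
    have ex: "exp x > 0" by simp
    have "Im z = N / D" unfolding Imz N_def D_def sd by simp
    moreover have "kernel_pq p q t (exp x) = t / (exp x * (t + exp x)) * (N / (pi * D))"
      unfolding k N_def D_def by simp
    moreover have nz: "exp x \<noteq> 0" "pi \<noteq> 0" "t + exp x \<noteq> 0" "exp x + t \<noteq> 0"
      using ex assms pi_gt_zero by (auto simp del: exp_gt_zero)
    ultimately have kk: "kernel_pq p q t (exp x) = t / (exp x * (t + exp x)) * (N / (pi * D))" "Im z = N / D"
      by auto
    have r1: "exp x * (t / (exp x * (t + exp x))) = t / (exp x + t)"
      by (simp only: times_divide_eq_right mult_divide_mult_cancel_left[OF nz(1)] add.commute)
    have r2: "pi * (N / (pi * D)) = N / D" using nz by (cases "D = 0") (simp_all add: field_simps)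
    have "2 * pi * (exp x * kernel_pq p q t (exp x)) = 2 * (exp x * (t / (exp x * (t + exp x)))) * (pi * (N / (pi * D)))"
      unfolding kk(1) by (simp only: mult_ac)
    also have "\<dots> = 2 * Im z * (t / (exp x + t))" unfolding r1 r2 kk by (simp add: mult_ac)
    finally show ?thesis by simp
  qed
  thus ?thesis using G by (simp add: algebra_simps)
qed

definition sv :: "real \<Rightarrow> real" where "sv t = ln t"
definition rect :: "real \<Rightarrow> real \<Rightarrow> complex" where "rect R = rectpath (Complex (-R) (-pi)) (Complex R pi)"

context
  fixes p q t :: real
  assumes p0: "0 < p" and pq: "p \<le> q" and q1: "q \<le> 1" and t0: "0 < t"
begin

definition "Fc w = Hc p q w * of_real t / Qf (sv t) w"

lemma F_holo: "Fc holomorphic_on Sr"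
proof -
  have "Ef (q-p) holomorphic_on Sr" "Ef p holomorphic_on Sr" "Qf (sv t) holomorphic_on Sr"
    using Ef_holo Qf_holo holomorphic_on_subset by blast+
  thus ?thesis unfolding Fc_def[abs_def] Hc_def using Ef_nz[OF p0] Qf_nz p0 pq q1
    by (auto intro!: holomorphic_intros)
qed

lemma exp_sv: "exp (of_real (sv t)) = (of_real t :: complex)"
  using t0 by (simp add: sv_def exp_of_real)

lemma F_eq_Gf: assumes "w \<in> Sr" "w \<noteq> 0" "w \<noteq> of_real (sv t)"
  shows "Fc w / (w - of_real (sv t)) = Gf p q t w"
proof -
  have "Qf (sv t) w * (w - of_real (sv t)) = exp w - of_real t"
    using assms by (simp add: Qf_def exp_sv)
  hence "Fc w / (w - of_real (sv t)) = Hc p q w * of_real t / (exp w - of_real t)"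
    by (simp add: Fc_def)
  thus ?thesis by (simp add: Gf_def Hc_nz_eq[OF assms(2)])
qed


lemma cauchy_rect: assumes "\<bar>(sv t)\<bar> < R"
  shows "(Gf p q t has_contour_integral (2 * pi * \<i> * Hc p q (of_real (sv t)))) (rect R)"
proof -
  have R0: "R > 0" using assms by linarith
  have pim: "path_image (rect R) = {z. Re z \<in> {-R, R} \<and> Im z \<in> {-pi..pi}} \<union>
           {z. Im z \<in> {-pi, pi} \<and> Re z \<in> {-R..R}}"
    unfolding rect_def using R0 pi_gt_zero by (subst path_image_rectpath) auto
  have sR: "-R < (sv t)" "(sv t) < R" using assms by auto
  have sub: "path_image (rect R) \<subseteq> Sr - {of_real (sv t)}"
  proof
    fix z assume "z \<in> path_image (rect R)"
    hence "(Re z = -R \<or> Re z = R) \<and> -pi \<le> Im z \<and> Im z \<le> pi \<or>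
           (Im z = -pi \<or> Im z = pi) \<and> -R \<le> Re z \<and> Re z \<le> R" unfolding pim by auto
    hence "\<bar>Im z\<bar> \<le> pi" "z \<noteq> of_real (sv t)" using sR pi_gt_zero
      by (auto simp: complex_eq_iff)
    moreover have "\<bar>Im z\<bar> < 3*pi/2" using calculation(1) pi_gt_zero by linarith
    ultimately show "z \<in> Sr - {of_real (sv t)}" by (simp add: Sr_def)
  qed
  have "of_real (sv t) \<in> Sr" by (simp add: Sr_def pi_gt_zero)
  hence svi: "of_real (sv t) \<in> interior Sr" by (simp add: interior_open[OF Sr_open])
  have "of_real (sv t) \<in> box (Complex (-R) (-pi)) (Complex R pi)"
    using assms pi_gt_zero by (auto simp: in_box_complex_iff)
  hence wn: "winding_number (rect R) (of_real (sv t)) = 1"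
    unfolding rect_def by (rule winding_number_rectpath)
  have "((\<lambda>w. Fc w / (w - of_real (sv t))) has_contour_integral
          (2*pi * \<i> * winding_number (rect R) (of_real (sv t)) * Fc (of_real (sv t)))) (rect R)"
    apply (rule Cauchy_integral_formula_convex_simple[OF Sr_convex F_holo])
    using sub svi by (auto simp: rect_def)
  moreover have "Fc (of_real (sv t)) = Hc p q (of_real (sv t))"
    using t0 by (simp add: Fc_def Qf_def exp_sv)
  ultimately have "((\<lambda>w. Fc w / (w - of_real (sv t))) has_contour_integral
          (2*pi * \<i> * Hc p q (of_real (sv t)))) (rect R)" using wn by simp
  thus ?thesis
    apply (rule has_contour_integral_eq)
    apply (rule F_eq_Gf)
    using sub apply blast
    unfolding pim using sR R0 pi_gt_zero by (auto simp: complex_eq_iff)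
qed

end





lemma lp_hor: "linepath (Complex x1 y) (Complex x2 y) u = Complex ((1-u)*x1 + u*x2) y"
  by (simp add: linepath_def complex_eq_iff algebra_simps)

lemma lp_ver: "linepath (Complex x y1) (Complex x y2) u = Complex x ((1-u)*y1 + u*y2)"
  by (simp add: linepath_def complex_eq_iff algebra_simps)

lemma cos_lt1: assumes "0 < p" "p \<le> 1" shows "cos (p * pi) < 1"
proof -
  have "cos (p * pi) < cos 0"
    by (rule cos_monotone_0_pi) (use assms pi_gt_zero in \<open>auto simp: mult_le_cancel_right1\<close>)
  thus ?thesis by simp
qed

lemma D_lower: fixes a c :: real assumes "0 \<le> a" "c < 1" "-1 \<le> c"
  shows "a^2 - 2*a*c + 1 \<ge> (1 - c)/2 * (1 + a^2)"
proof -
  have "2*a \<le> a^2 + 1" using sum_squares_ge_zero[of "a - 1" 0] by (simp add: power2_eq_square algebra_simps)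
  hence h1: "(1+c) * (2*a) \<le> (1+c)*(a^2+1)" using assms by (intro mult_left_mono) auto
  have h2: "(2*c)*a \<le> (1+c)*a" using assms by (intro mult_right_mono) auto
  have e1: "(1+c) * (2*a) = 2*((1+c)*a)" "(2*c)*a = 2*(a*c)" by (simp_all add: algebra_simps)
  have e2: "a^2 - 2*a*c + 1 - (1 - c)/2 * (1 + a^2) = ((1+c)*(a^2+1) - 4*(a*c))/2"
    by (simp add: field_simps)
  have "(1+c)*(a^2+1) - 4*(a*c) \<ge> 0" using h1 h2 unfolding e1 by linarith
  hence "a^2 - 2*a*c + 1 - (1 - c)/2 * (1 + a^2) \<ge> 0" unfolding e2 by simp
  thus ?thesis by simp
qed

lemma D_pos: assumes "0 < p" "p \<le> 1" "0 \<le> l"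
  shows "l powr (2*p) - 2 * l powr p * cos (p*pi) + 1 > 0"
proof -
  have c: "cos (p*pi) < 1" "-1 \<le> cos (p*pi)" using cos_lt1[OF assms(1,2)] by auto
  have "l powr (2*p) = (l powr p)^2" unfolding power2_eq_square by (simp only: mult_2 powr_add)
  hence "l powr (2*p) - 2 * l powr p * cos (p*pi) + 1 \<ge> (1 - cos (p*pi))/2 * (1 + (l powr p)^2)"
    using D_lower[of "l powr p" "cos (p*pi)"] c by simp
  moreover have "(1 - cos (p*pi))/2 * (1 + (l powr p)^2) > 0" using c
    by (intro mult_pos_pos) (auto intro: add_pos_nonneg)
  ultimately show ?thesis by linarith
qed

lemma kernel_cont: assumes "0 < p" "p \<le> 1" "0 < t" "S \<subseteq> {0<..}"
  shows "continuous_on S (kernel_pq p q t)"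
proof -
  have pos: "x > 0" if "x \<in> S" for x using assms(4) that by auto
  have nz1: "x * (t + x) \<noteq> 0" if "x \<in> S" for x using pos[OF that] assms(3) by simp
  have nz2: "pi * (x powr (2*p) - 2 * x powr p * cos (p*pi) + 1) \<noteq> 0" if "x \<in> S" for x
    using D_pos[OF assms(1,2), of x] pos[OF that] by simp
  show ?thesis unfolding kernel_pq_def[abs_def]
    apply (intro continuous_intros)
    using pos nz1 nz2 by auto
qed

lemma exps_gen: "0 < t \<Longrightarrow> exp (of_real (sv t)) = (of_real t::complex)"
  by (simp add: sv_def exp_of_real)

lemma Gf_cont:
  assumes "0 < p" "p \<le> 1" "0 < t" "T \<subseteq> Sr" "\<And>w. w \<in> T \<Longrightarrow> w \<noteq> 0 \<and> w \<noteq> of_real (sv t)"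
  shows "continuous_on T (Gf p q t)"
proof -
  have d1: "exp (of_real p * w) - 1 \<noteq> 0" if "w \<in> T" for w
  proof -
    have "Ef p w \<noteq> 0" using Ef_nz[OF assms(1,2)] that assms(4) by blast
    thus ?thesis using assms(5)[OF that] by (auto simp: Ef_def)
  qed
  have d2: "exp w - of_real t \<noteq> 0" if "w \<in> T" for w
  proof -
    have "Qf (sv t) w \<noteq> 0" using Qf_nz that assms(4) by blast
    thus ?thesis using assms(5)[OF that] exps_gen[OF assms(3)] by (auto simp: Qf_def)
  qed
  show ?thesis unfolding Gf_def[abs_def] using d1 d2
    by (intro continuous_intros) auto
qed

lemma rect_eq: "rect R = linepath (Complex (-R) (-pi)) (Complex R (-pi)) +++
   (linepath (Complex R (-pi)) (Complex R pi) +++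
   (linepath (Complex R pi) (Complex (-R) pi) +++ linepath (Complex (-R) pi) (Complex (-R) (-pi))))"
  by (simp add: rect_def rectpath_def Let_def)

lemma rect_img: assumes "\<bar>s\<bar> < R"
  shows "path_image (rect R) \<subseteq> Sr" "\<And>w. w \<in> path_image (rect R) \<Longrightarrow> w \<noteq> 0 \<and> w \<noteq> of_real s"
proof -
  have R0: "R > 0" using assms by linarith
  have sR: "-R < s" "s < R" using assms by auto
  have pim: "path_image (rect R) = {z. Re z \<in> {-R, R} \<and> Im z \<in> {-pi..pi}} \<union>
           {z. Im z \<in> {-pi, pi} \<and> Re z \<in> {-R..R}}"
    unfolding rect_def using R0 pi_gt_zero by (subst path_image_rectpath) auto
  have "\<bar>Im z\<bar> < 3*pi/2 \<and> z \<noteq> 0 \<and> z \<noteq> of_real s" if "z \<in> path_image (rect R)" for z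
  proof -
    from that have "(Re z = -R \<or> Re z = R) \<and> -pi \<le> Im z \<and> Im z \<le> pi \<or>
           (Im z = -pi \<or> Im z = pi) \<and> -R \<le> Re z \<and> Re z \<le> R" unfolding pim by auto
    hence "\<bar>Im z\<bar> \<le> pi" "z \<noteq> of_real s" "z \<noteq> 0" using sR R0 pi_gt_zero
      by (auto simp: complex_eq_iff)
    moreover have "\<bar>Im z\<bar> < 3*pi/2" using calculation(1) pi_gt_zero by linarith
    ultimately show ?thesis by simp
  qed
  thus "path_image (rect R) \<subseteq> Sr" "\<And>w. w \<in> path_image (rect R) \<Longrightarrow> w \<noteq> 0 \<and> w \<noteq> of_real s"
    by (auto simp: Sr_def)
qed

context
  fixes p q t :: real
  assumes p0: "0 < p" and pq: "p \<le> q" and q1: "q \<le> 1" and t0: "0 < t"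
begin

lemma main_eq: assumes "\<bar>sv t\<bar> < R"
  shows "2*pi*\<i> * Hc p q (of_real (sv t)) =
     2*pi*\<i> * of_real (integral {exp(-R)..exp R} (kernel_pq p q t))
     + contour_integral (linepath (Complex R (-pi)) (Complex R pi)) (Gf p q t)
     + contour_integral (linepath (Complex (-R) pi) (Complex (-R) (-pi))) (Gf p q t)"
proof -
  define a1 a2 a3 a4 where "a1 = Complex (-R) (-pi)" and "a2 = Complex R (-pi)"
    and "a3 = Complex R pi" and "a4 = Complex (-R) pi"
  have R0: "R > 0" using assms by linarith
  note img = rect_img[OF assms]
  have pI: "path_image (rect R) = closed_segment a1 a2 \<union> (closed_segment a2 a3 \<union> (closed_segment a3 a4 \<union> closed_segment a4 a1))"
    unfolding rect_eq a1_def a2_def a3_def a4_def by (simp add: path_image_join)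
  have ci: "Gf p q t contour_integrable_on linepath a b" if "closed_segment a b \<subseteq> path_image (rect R)" for a b
    apply (rule contour_integrable_continuous_linepath)
    apply (rule Gf_cont[OF p0 _ t0])
    using that img pq q1 by auto
  have ci1: "Gf p q t contour_integrable_on linepath a1 a2" by (rule ci) (auto simp: pI)
  have ci2: "Gf p q t contour_integrable_on linepath a2 a3" by (rule ci) (auto simp: pI)
  have ci3: "Gf p q t contour_integrable_on linepath a3 a4" by (rule ci) (auto simp: pI)
  have ci4: "Gf p q t contour_integrable_on linepath a4 a1" by (rule ci) (auto simp: pI)
  have ci3': "Gf p q t contour_integrable_on linepath a4 a3" by (rule ci) (auto simp: pI closed_segment_commute)
  define I1 I2 I3 I4 I3' where "I1 = contour_integral (linepath a1 a2) (Gf p q t)"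
    and "I2 = contour_integral (linepath a2 a3) (Gf p q t)"
    and "I3 = contour_integral (linepath a3 a4) (Gf p q t)"
    and "I4 = contour_integral (linepath a4 a1) (Gf p q t)"
    and "I3' = contour_integral (linepath a4 a3) (Gf p q t)"
  have h1: "(Gf p q t has_contour_integral I1) (linepath a1 a2)" unfolding I1_def using ci1 by (rule has_contour_integral_integral)
  have h2: "(Gf p q t has_contour_integral I2) (linepath a2 a3)" unfolding I2_def using ci2 by (rule has_contour_integral_integral)
  have h3: "(Gf p q t has_contour_integral I3) (linepath a3 a4)" unfolding I3_def using ci3 by (rule has_contour_integral_integral)
  have h4: "(Gf p q t has_contour_integral I4) (linepath a4 a1)" unfolding I4_def using ci4 by (rule has_contour_integral_integral)
  have h3': "(Gf p q t has_contour_integral I3') (linepath a4 a3)" unfolding I3'_def using ci3' by (rule has_contour_integral_integral)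
  have "(Gf p q t has_contour_integral (I1 + (I2 + (I3 + I4)))) (rect R)"
    unfolding rect_eq a1_def[symmetric] a2_def[symmetric] a3_def[symmetric] a4_def[symmetric]
    by (intro has_contour_integral_join h1 h2 h3 h4 valid_path_join valid_path_linepath) auto
  hence "complex_of_real (2*pi) * \<i> * Hc p q (of_real (sv t)) = I1 + (I2 + (I3 + I4))"
    by (rule has_contour_integral_unique[OF cauchy_rect[OF p0 pq q1 t0 assms]])
  hence E: "2*pi*\<i> * Hc p q (of_real (sv t)) = I1 + (I2 + (I3 + I4))"
    by simp
  have I3e: "I3 = - I3'"
    using has_contour_integral_unique[OF h3 has_contour_integral_reverse_linepath[OF h3']] .
  define xu where "xu u = (1-u)*(-R) + u*R" for u
  have d21: "a2 - a1 = of_real (2*R)" "a3 - a4 = of_real (2*R)"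
    by (simp_all add: a1_def a2_def a3_def a4_def complex_eq_iff)
  have hh1: "((\<lambda>u. Gf p q t (linepath a1 a2 u) * (a2 - a1)) has_integral I1) {0..1}"
    using h1 by (simp only: has_contour_integral_linepath)
  have hh3: "((\<lambda>u. Gf p q t (linepath a4 a3 u) * (a3 - a4)) has_integral I3') {0..1}"
    using h3' by (simp only: has_contour_integral_linepath)
  have D: "((\<lambda>u. Gf p q t (linepath a1 a2 u) * (a2 - a1) - Gf p q t (linepath a4 a3 u) * (a3 - a4))
      has_integral (I1 - I3')) {0..1}"
    by (rule has_integral_diff[OF hh1 hh3])
  have pw: "Gf p q t (linepath a1 a2 u) * (a2 - a1) - Gf p q t (linepath a4 a3 u) * (a3 - a4)
      = 2*pi*\<i> * of_real (2*R*exp (xu u) * kernel_pq p q t (exp (xu u)))" for u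
  proof -
    have "linepath a1 a2 u = Complex (xu u) (-pi)" "linepath a4 a3 u = Complex (xu u) pi"
      by (simp_all add: a1_def a2_def a3_def a4_def lp_hor xu_def)
    hence "Gf p q t (linepath a1 a2 u) * (a2 - a1) - Gf p q t (linepath a4 a3 u) * (a3 - a4)
      = (Gf p q t (Complex (xu u) (-pi)) - Gf p q t (Complex (xu u) pi)) * of_real (2*R)"
      unfolding d21 by (simp add: algebra_simps)
    also have "\<dots> = 2*pi*\<i> * of_real (exp (xu u) * kernel_pq p q t (exp (xu u))) * of_real (2*R)"
      using Gf_diff[OF t0] by simp
    finally show ?thesis by (simp add: algebra_simps)
  qed
  have sub: "((\<lambda>u. (2*R*exp (xu u)) *\<^sub>R kernel_pq p q t (exp (xu u))) has_integral
        integral {exp (xu 0)..exp (xu 1)} (kernel_pq p q t)) {0..1}"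
  proof (rule has_integral_substitution[where c="exp(-R)" and d="exp R"])
    show "exp (xu 0) \<le> exp (xu 1)" using R0 by (simp add: xu_def)
    show "(\<lambda>u. exp (xu u)) ` {0..1} \<subseteq> {exp (- R)..exp R}"
    proof
      fix y assume "y \<in> (\<lambda>u. exp (xu u)) ` {0..1}"
      then obtain u where u: "u \<in> {0..1}" "y = exp (xu u)" by auto
      have "xu u = -R + 2*R*u" by (simp add: xu_def algebra_simps)
      moreover have "0 \<le> 2*R*u" "2*R*u \<le> 2*R" using u R0 by auto
      ultimately have "-R \<le> xu u" "xu u \<le> R" by linarith+
      thus "y \<in> {exp (- R)..exp R}" using u by auto
    qed
    show "continuous_on {exp (- R)..exp R} (kernel_pq p q t)"
      by (rule kernel_cont[OF p0 _ t0]) (use pq q1 in \<open>auto intro: less_le_trans[OF exp_gt_zero]\<close>)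
    show "((\<lambda>u. exp (xu u)) has_field_derivative 2*R*exp (xu u)) (at u within {0..1})" for u
      unfolding xu_def by (auto intro!: derivative_eq_intros simp: algebra_simps)
  qed simp
  have x01: "xu 0 = -R" "xu 1 = R" by (simp_all add: xu_def)
  have sub2: "((\<lambda>u. 2*pi*\<i> * of_real (2*R*exp (xu u) * kernel_pq p q t (exp (xu u)))) has_integral
        (2*pi*\<i> * of_real (integral {exp(-R)..exp R} (kernel_pq p q t)))) {0..1}"
    using has_integral_mult_right[OF has_integral_of_real[OF sub[unfolded x01]], of "2*pi*\<i>"]
    by simp
  have J: "I1 - I3' = 2*pi*\<i> * of_real (integral {exp(-R)..exp R} (kernel_pq p q t))"
    using has_integral_unique[OF D[unfolded pw] sub2] .
  have fin: "2*pi*\<i> * Hc p q (of_real (sv t)) = (I1 - I3') + I2 + I4"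
    using E I3e by (simp only: diff_conv_add_uminus add.assoc add.commute add.left_commute)
  have I2e: "I2 = contour_integral (linepath (Complex R (-pi)) (Complex R pi)) (Gf p q t)"
    unfolding I2_def a2_def a3_def ..
  have I4e: "I4 = contour_integral (linepath (Complex (-R) pi) (Complex (-R) (-pi))) (Gf p q t)"
    unfolding I4_def a4_def a1_def ..
  show ?thesis using fin unfolding J I2e I4e .
qed

end




lemma kernel_bound:
  fixes p q t x :: real
  assumes p0: "0 < p" and pq: "p \<le> q" and q1: "q \<le> 1" and t0: "0 < t" and x0: "0 < x"
  defines "\<delta> \<equiv> (1 - cos (p*pi))/2"
  shows "\<bar>kernel_pq p q t x\<bar> \<le> (if x < 1 then 3/(pi*\<delta>) * x powr (p-1) else 3*t/(pi*\<delta>) * x powr (q-p-2))"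
proof -
  define a where "a = x powr p"
  define b where "b = x powr q"
  define N where "N = a * b * sin ((q - p) * pi) - b * sin (q * pi) + a * sin (p * pi)"
  define D where "D = a^2 - 2 * a * cos (p * pi) + 1"
  have c: "cos (p*pi) < 1" "-1 \<le> cos (p*pi)" using cos_lt1[OF p0] q1 pq by auto
  have d0: "\<delta> > 0" using c by (simp add: \<delta>_def)
  have a0: "a > 0" "b > 0" using x0 by (simp_all add: a_def b_def)
  have ab: "x powr (p + q) = a * b" "x powr (2 * p) = a^2"
    unfolding a_def b_def power2_eq_square by (simp_all only: mult_2 powr_add)
  have k: "kernel_pq p q t x = t / (x * (t + x)) * (N / (pi * D))"
    unfolding kernel_pq_def ab N_def D_def by (simp add: a_def[symmetric] b_def[symmetric])
  have DL: "D \<ge> \<delta> * (1 + a^2)" unfolding D_def \<delta>_def using D_lower[of a "cos (p*pi)"] c a0 by simp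
  have Dp: "D > 0" using DL d0 by (smt (verit) mult_pos_pos power2_eq_square zero_le_square)
  have Nb: "\<bar>N\<bar> \<le> a*b + b + a"
  proof -
    have "\<bar>N\<bar> \<le> \<bar>a * b * sin ((q - p) * pi)\<bar> + \<bar>b * sin (q * pi)\<bar> + \<bar>a * sin (p * pi)\<bar>"
      unfolding N_def by linarith
    also have "\<dots> \<le> a*b + b + a" using a0
      by (intro add_mono) (auto simp: abs_mult intro!: mult_left_le)
    finally show ?thesis .
  qed
  have kabs: "\<bar>kernel_pq p q t x\<bar> = t / (x * (t + x)) * (\<bar>N\<bar> / (pi * D))"
    unfolding k using t0 x0 Dp pi_gt_zero by (simp add: abs_mult abs_divide)
  show ?thesis
  proof (cases "x < 1")
    case True
    have b1: "b \<le> a" unfolding a_def b_def using powr_mono'[OF pq] x0 True by simp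
    have a1: "a \<le> 1" unfolding a_def using powr_le1[of p x] p0 x0 True by simp
    have "a*b \<le> a" using b1 a1 a0 by (simp add: mult_le_one mult_left_le)
    hence N3: "\<bar>N\<bar> \<le> 3*a" using Nb b1 by linarith
    have D1: "D \<ge> \<delta>" using DL d0 by (smt (verit) mult_le_cancel_left1 zero_le_power2)
    have tx: "t + x \<noteq> 0" using t0 x0 by linarith
    have "t / (x * (t + x)) \<le> (t + x) / (x * (t + x))"
      by (rule divide_right_mono) (use t0 x0 in auto)
    also have "(t + x) / (x * (t + x)) = 1 / x" using tx by simp
    finally have f1: "t / (x * (t + x)) \<le> 1/x" .
    have A: "\<bar>N\<bar> / (pi*D) \<le> 3*a/(pi*\<delta>)"
      by (rule frac_le) (use N3 D1 d0 pi_gt_zero in auto)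
    have "\<bar>kernel_pq p q t x\<bar> \<le> (1/x) * (3*a / (pi * \<delta>))"
      unfolding kabs by (rule mult_mono[OF f1 A]) (use x0 a0 d0 Dp pi_gt_zero in auto)
    also have "\<dots> = 3/(pi*\<delta>) * x powr (p-1)"
      unfolding a_def using x0 by (simp add: powr_diff field_simps)
    finally show ?thesis using True by simp
  next
    case False
    have b1: "a \<le> b" unfolding a_def b_def using powr_mono[OF pq] False by simp
    have a1: "1 \<le> a" unfolding a_def using ge_one_powr_ge_zero[of x p] p0 False by simp
    have "b \<le> a*b" using a1 a0 by simp
    hence N3: "\<bar>N\<bar> \<le> 3*(a*b)" using Nb b1 by linarith
    have D1: "D \<ge> \<delta> * a^2" using DL d0 by (smt (verit) mult_left_mono)
    have xt: "0 \<le> x*t" using t0 x0 by simp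
    have xx: "x^2 \<le> x*(t+x)" using xt by (simp add: power2_eq_square algebra_simps)
    have xp: "0 < x*(t+x) * x^2" using t0 x0 by (intro mult_pos_pos) auto
    have f1: "t / (x * (t + x)) \<le> t/x^2"
      by (rule divide_left_mono[OF xx]) (use t0 xp in auto)
    have A: "\<bar>N\<bar> / (pi*D) \<le> 3*(a*b) / (pi * (\<delta> * a^2))"
      by (rule frac_le) (use N3 D1 d0 pi_gt_zero a0 in auto)
    have "\<bar>kernel_pq p q t x\<bar> \<le> (t/x^2) * (3*(a*b) / (pi * (\<delta> * a^2)))"
      unfolding kabs by (rule mult_mono[OF f1 A]) (use x0 a0 d0 t0 Dp pi_gt_zero in auto)
    also have "\<dots> = 3*t/(pi*\<delta>) * (b / (a * x^2))"
      using a0 x0 d0 by (simp add: field_simps power2_eq_square)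
    also have "b / (a * x^2) = x powr (q-p-2)"
    proof -
      have x2: "x^2 = x powr 2" using x0 by (simp add: powr_numeral)
      have "b / (a * x^2) = x powr q / x powr (p + 2)" unfolding a_def b_def x2 by (simp only: powr_add)
      also have "\<dots> = x powr (q - (p + 2))" by (rule powr_diff[symmetric])
      finally show ?thesis by (simp add: algebra_simps)
    qed
    finally show ?thesis using False by simp
  qed
qed

lemma kernel_integrable:
  fixes p q t :: real
  assumes p0: "0 < p" and pq: "p \<le> q" and q1: "q \<le> 1" and t0: "0 < t"
  shows "set_integrable lborel {0<..} (kernel_pq p q t)"
proof -
  define \<delta> where "\<delta> = (1 - cos (p*pi))/2"
  define g where "g x = (if x < 1 then 3/(pi*\<delta>) * x powr (p-1) else 3*t/(pi*\<delta>) * x powr (q-p-2))" for x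
  have cont: "continuous_on {0<..} (kernel_pq p q t)"
    by (rule kernel_cont[OF p0 _ t0]) (use pq q1 in auto)
  have g1: "g integrable_on {0..1}"
  proof -
    have "((\<lambda>x. x powr (p-1)) has_integral (1 powr (p-1+1)/(p-1+1))) {0..1}"
      by (rule has_integral_powr_from_0) (use p0 in auto)
    hence "((\<lambda>x. 3/(pi*\<delta>) * x powr (p-1)) has_integral (3/(pi*\<delta>) * (1 powr (p-1+1)/(p-1+1)))) {0..1}"
      by (rule has_integral_mult_right)
    hence "(\<lambda>x. 3/(pi*\<delta>) * x powr (p-1)) integrable_on {0..1}" unfolding integrable_on_def by blast
    thus ?thesis by (rule integrable_spike_finite[where S="{1}", rotated 2]) (auto simp: g_def)
  qed
  have g2: "g integrable_on {1..}"
  proof -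
    have "((\<lambda>x. x powr (q-p-2)) has_integral (-(1 powr (q-p-2+1)) / (q-p-2+1))) {1..}"
      by (rule has_integral_powr_to_inf) (use p0 q1 in auto)
    hence "((\<lambda>x. 3*t/(pi*\<delta>) * x powr (q-p-2)) has_integral (3*t/(pi*\<delta>) * (-(1 powr (q-p-2+1)) / (q-p-2+1)))) {1..}"
      by (rule has_integral_mult_right)
    hence "(\<lambda>x. 3*t/(pi*\<delta>) * x powr (q-p-2)) integrable_on {1..}" unfolding integrable_on_def by blast
    thus ?thesis by (rule integrable_spike_finite[where S="{}", rotated 2]) (auto simp: g_def)
  qed
  have "g integrable_on ({0..1} \<union> {1..})"
    by (rule integrable_Un[OF _ g1 g2]) (auto intro: negligible_subset[of "{1}"])
  moreover have "{0..1} \<union> {1..} = {0::real..}" by auto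
  ultimately have g0: "g integrable_on {0..}" by simp
  have g3: "g integrable_on {0<..}"
    by (rule integrable_spike_set[OF g0]) (auto intro: negligible_subset[of "{0}"])
  have ob: "{0::real<..} \<in> sets borel" by (rule borel_open) simp
  have ai: "kernel_pq p q t absolutely_integrable_on {0<..}"
  proof (rule measurable_bounded_by_integrable_imp_absolutely_integrable[OF _ _ g3])
    show "kernel_pq p q t \<in> borel_measurable (lebesgue_on {0<..})"
      by (rule continuous_imp_measurable_on_sets_lebesgue[OF cont]) (rule sets_completionI_sets, use ob in simp)
    show "{0::real<..} \<in> sets lebesgue"
      by (rule sets_completionI_sets) (use ob in simp)
    show "norm (kernel_pq p q t x) \<le> g x" if "x \<in> {0<..}" for x
      using kernel_bound[OF p0 pq q1 t0, of x] that unfolding g_def \<delta>_def by simp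
  qed
  have meas: "(\<lambda>x. indicator {0<..} x *\<^sub>R kernel_pq p q t x) \<in> borel_measurable lborel"
    using borel_measurable_continuous_on_indicator[OF ob cont] by simp
  show ?thesis
    using ai unfolding set_integrable_def using integrable_completion[OF meas] by simp
qed




lemma Gf_bound_gen:
  fixes p q t A Y Z :: real and w :: complex
  assumes t0: "0 < t" and hA: "norm (exp (of_real q * w) - exp (of_real p * w)) \<le> A"
    and Y0: "0 < Y" and hY: "Y \<le> norm (exp (of_real p * w) - 1)"
    and Z0: "0 < Z" and hZ: "Z \<le> norm (exp w - of_real t)"
  shows "norm (Gf p q t w) \<le> A * t / (Y * Z)"
proof -
  have n0: "0 \<le> A" using hA norm_ge_zero order_trans by blast
  have "norm (Gf p q t w) = norm (exp (of_real q * w) - exp (of_real p * w)) * t /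
       (norm (exp (of_real p * w) - 1) * norm (exp w - of_real t))"
    using t0 by (simp add: Gf_def norm_divide norm_mult)
  also have "\<dots> \<le> A * t / (Y * Z)"
  proof (rule frac_le)
    show "0 \<le> A * t" using n0 t0 by simp
    show "norm (exp (of_real q * w) - exp (of_real p * w)) * t \<le> A * t"
      using hA t0 by (simp add: mult_right_mono)
    show "0 < Y * Z" using Y0 Z0 by simp
    show "Y * Z \<le> norm (exp (of_real p * w) - 1) * norm (exp w - of_real t)"
      by (rule mult_mono[OF hY hZ]) (use Y0 Z0 in auto)
  qed
  finally show ?thesis .
qed

lemma Gf_bound_right:
  fixes p q t R :: real and w :: complex
  assumes p0: "0 < p" and pq: "p \<le> q" and t0: "0 < t" and w: "Re w = R" and R0: "0 < R"
    and e1: "2 \<le> exp (p*R)" and e2: "2*t \<le> exp R"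
  shows "norm (Gf p q t w) \<le> 8 * t * exp ((q - p - 1) * R)"
proof -
  have e: "norm (exp (of_real a * w)) = exp (a * R)" for a by (simp add: w)
  have pqR: "exp (p*R) \<le> exp (q*R)" using pq R0 by (simp add: mult_right_mono)
  have A: "norm (exp (of_real q * w) - exp (of_real p * w)) \<le> 2 * exp (q*R)"
    using norm_triangle_ineq4[of "exp (of_real q * w)" "exp (of_real p * w)"] pqR unfolding e by linarith
  have Y: "exp (p*R)/2 \<le> norm (exp (of_real p * w) - 1)"
    using norm_triangle_ineq2[of "exp (of_real p * w)" 1] e1 unfolding e by simp
  have Z: "exp R/2 \<le> norm (exp w - of_real t)"
    using norm_triangle_ineq2[of "exp w" "of_real t"] e2 t0 w by simp
  have "norm (Gf p q t w) \<le> 2 * exp (q*R) * t / (exp (p*R)/2 * (exp R/2))"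
    by (rule Gf_bound_gen[OF t0 A _ Y _ Z]) auto
  also have "\<dots> = 8 * t * (exp (q*R) / (exp (p*R) * exp R))"
    by (simp add: field_simps)
  also have "exp (q*R) / (exp (p*R) * exp R) = exp ((q - p - 1) * R)"
  proof -
    have "(q - p - 1) * R = q*R - (p*R + R)" by (simp add: algebra_simps)
    thus ?thesis by (simp only: exp_diff exp_add)
  qed
  finally show ?thesis .
qed

lemma Gf_bound_left:
  fixes p q t R :: real and w :: complex
  assumes p0: "0 < p" and pq: "p \<le> q" and t0: "0 < t" and w: "Re w = -R" and R0: "0 < R"
    and e1: "exp (-(p*R)) \<le> 1/2" and e2: "exp (-R) \<le> t/2"
  shows "norm (Gf p q t w) \<le> 8 * exp (-(p*R))"
proof -
  have e: "norm (exp (of_real a * w)) = exp (-(a * R))" for a by (simp add: w)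
  have pqR: "exp (-(q*R)) \<le> exp (-(p*R))" using pq R0 by (simp add: mult_right_mono)
  have A: "norm (exp (of_real q * w) - exp (of_real p * w)) \<le> 2 * exp (-(p*R))"
    using norm_triangle_ineq4[of "exp (of_real q * w)" "exp (of_real p * w)"] pqR unfolding e by linarith
  have Y: "1/2 \<le> norm (exp (of_real p * w) - 1)"
  proof -
    have "norm (1::complex) - norm (exp (of_real p * w)) \<le> norm (1 - exp (of_real p * w))"
      by (rule norm_triangle_ineq2)
    thus ?thesis using e1 unfolding e by (simp add: norm_minus_commute)
  qed
  have Z: "t/2 \<le> norm (exp w - of_real t)"
  proof -
    have "norm (of_real t :: complex) - norm (exp w) \<le> norm (of_real t - exp w)"
      by (rule norm_triangle_ineq2)
    thus ?thesis using e2 t0 w by (simp add: norm_minus_commute)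
  qed
  have "norm (Gf p q t w) \<le> 2 * exp (-(p*R)) * t / (1/2 * (t/2))"
    by (rule Gf_bound_gen[OF t0 A _ Y _ Z]) (use t0 in auto)
  also have "\<dots> = 8 * exp (-(p*R))" using t0 by (simp add: field_simps)
  finally show ?thesis .
qed

lemma big_R:
  fixes p t R :: real
  assumes p0: "0 < p" and t0: "0 < t" and R: "max (ln 2 / p) (max (ln (2*t)) (ln (2/t))) \<le> R"
  shows "2 \<le> exp (p*R)" "2*t \<le> exp R" "exp (-(p*R)) \<le> 1/2" "exp (-R) \<le> t/2"
proof -
  have "ln 2 / p \<le> R" using R by simp
  hence "ln 2 \<le> p * R" using p0 by (simp add: pos_divide_le_eq mult.commute)
  hence "exp (ln 2) \<le> exp (p*R)" by (simp only: exp_le_cancel_iff)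
  moreover have "exp (ln 2) = (2::real)" by simp
  ultimately show 1: "2 \<le> exp (p*R)" by linarith
  have "ln (2*t) \<le> R" using R by simp
  hence "exp (ln (2*t)) \<le> exp R" by simp
  thus "2*t \<le> exp R" using t0 by simp
  show "exp (-(p*R)) \<le> 1/2"
    using le_imp_inverse_le[OF 1] by (simp add: exp_minus inverse_eq_divide)
  have "ln (2/t) \<le> R" using R by simp
  hence "exp (ln (2/t)) \<le> exp R" by simp
  hence 2: "2/t \<le> exp R" using t0 by simp
  show "exp (-R) \<le> t/2"
    using le_imp_inverse_le[OF 2] t0 by (simp add: exp_minus inverse_eq_divide)
qed

lemma Hc_value:
  fixes p q t :: real
  assumes p0: "0 < p" and pq: "p \<le> q" and q1: "q \<le> 1" and t0: "0 < t"
  shows "fpq p q t = p / q + (p / q) * Re (Hc p q (of_real (sv t)))"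
proof (cases "t = 1")
  case True
  hence "sv t = 0" by (simp add: sv_def)
  hence "Hc p q (of_real (sv t)) = of_real ((q - p) / p)"
    by (simp add: Hc_def Ef_def)
  hence H: "Re (Hc p q (of_real (sv t))) = (q - p) / p" by simp
  have f1: "fpq p q t = 1" using True by (simp add: fpq_def)
  have "p / q + p / q * ((q - p) / p) = 1" using p0 pq by (simp add: field_simps)
  thus ?thesis unfolding H f1 by simp
next
  case False
  have s0: "sv t \<noteq> 0" using False t0 by (simp add: sv_def)
  have ep: "exp (of_real a * of_real (sv t)) = (of_real (t powr a) :: complex)" for a
    using t0 by (simp add: sv_def powr_def exp_of_real[symmetric] mult.commute)
  have tp: "t powr p \<noteq> 1"
  proof
    assume "t powr p = 1"
    hence "p * ln t = 0" using t0 by (simp add: powr_def)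
    hence "ln t = 0" using p0 by simp
    thus False using False t0 by simp
  qed
  have "Hc p q (of_real (sv t)) = of_real ((t powr q - t powr p) / (t powr p - 1))"
    using s0 by (simp add: Hc_nz_eq ep)
  hence "Re (Hc p q (of_real (sv t))) = (t powr q - t powr p) / (t powr p - 1)" by simp
  moreover have "fpq p q t = p / q * ((t powr q - 1) / (t powr p - 1))"
    using False by (simp add: fpq_def)
  moreover have "(t powr q - 1) / (t powr p - 1) = 1 + (t powr q - t powr p) / (t powr p - 1)"
    using tp by (simp add: field_simps)
  ultimately show ?thesis by (simp add: algebra_simps)
qed

context
  fixes p q t :: real
  assumes p0: "0 < p" and pq: "p \<le> q" and q1: "q \<le> 1" and t0: "0 < t"
begin

definition "Rn n = (\<bar>sv t\<bar> + 1) + real n"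
definition "Ev n = contour_integral (linepath (Complex (Rn n) (-pi)) (Complex (Rn n) pi)) (Gf p q t)
     + contour_integral (linepath (Complex (-(Rn n)) pi) (Complex (-(Rn n)) (-pi))) (Gf p q t)"
definition "Jn n = integral {exp(-(Rn n))..exp (Rn n)} (kernel_pq p q t)"

lemma Rn_top: "filterlim Rn at_top sequentially"
  unfolding Rn_def[abs_def] by (rule filterlim_tendsto_add_at_top[OF tendsto_const filterlim_real_sequentially])

lemma Rn_ge: "\<bar>sv t\<bar> < Rn n" "1 \<le> Rn n" unfolding Rn_def by auto

lemma J_eq: "2*pi*\<i> * Hc p q (of_real (sv t)) = 2*pi*\<i> * of_real (Jn n) + Ev n"
  using main_eq[OF p0 pq q1 t0 Rn_ge(1)[of n]] unfolding Jn_def Ev_def by (simp add: add.assoc)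

lemma seg_cont: assumes "\<bar>sv t\<bar> < R" "closed_segment a b \<subseteq> path_image (rect R)"
  shows "Gf p q t contour_integrable_on linepath a b"
  apply (rule contour_integrable_continuous_linepath)
  apply (rule Gf_cont[OF p0 _ t0])
  using assms rect_img[OF assms(1)] pq q1 by auto

lemma Ev_bound:
  assumes R: "max (ln 2 / p) (max (ln (2*t)) (ln (2/t))) \<le> Rn n"
  shows "norm (Ev n) \<le> 2*pi*(8 * t * exp ((q - p - 1) * Rn n)) + 2*pi*(8 * exp (-(p * Rn n)))"
proof -
  define R where "R = Rn n"
  have R0: "0 < R" using Rn_ge(2)[of n] unfolding R_def by linarith
  have sR: "\<bar>sv t\<bar> < R" using Rn_ge(1)[of n] unfolding R_def .
  note bR = big_R[OF p0 t0 R[folded R_def]]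
  have pI: "path_image (rect R) = closed_segment (Complex (-R) (-pi)) (Complex R (-pi)) \<union>
     (closed_segment (Complex R (-pi)) (Complex R pi) \<union>
     (closed_segment (Complex R pi) (Complex (-R) pi) \<union> closed_segment (Complex (-R) pi) (Complex (-R) (-pi))))"
    unfolding rect_eq by (simp add: path_image_join)
  have ci2: "Gf p q t contour_integrable_on linepath (Complex R (-pi)) (Complex R pi)"
    by (rule seg_cont[OF sR]) (auto simp: pI)
  have ci4: "Gf p q t contour_integrable_on linepath (Complex (-R) pi) (Complex (-R) (-pi))"
    by (rule seg_cont[OF sR]) (auto simp: pI)
  have n2: "norm (Complex R pi - Complex R (-pi)) = 2*pi" "norm (Complex (-R) (-pi) - Complex (-R) pi) = 2*pi"
  proof -
    have "Complex R pi - Complex R (-pi) = Complex 0 (2*pi)" "Complex (-R) (-pi) - Complex (-R) pi = - Complex 0 (2*pi)"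
      by (simp_all add: complex_eq_iff)
    moreover have "cmod (Complex 0 (2*pi)) = 2*pi"
    proof -
      have "Complex 0 (2*pi) = of_real (2*pi) * \<i>" by (simp add: complex_eq_iff)
      thus ?thesis using pi_gt_zero by (simp add: norm_mult)
    qed
    ultimately show "norm (Complex R pi - Complex R (-pi)) = 2*pi" "norm (Complex (-R) (-pi) - Complex (-R) pi) = 2*pi"
      by simp_all
  qed
  have b2: "norm (contour_integral (linepath (Complex R (-pi)) (Complex R pi)) (Gf p q t)) \<le> 8 * t * exp ((q - p - 1) * R) * (2*pi)"
  proof -
    have "norm (contour_integral (linepath (Complex R (-pi)) (Complex R pi)) (Gf p q t)) \<le> 8 * t * exp ((q - p - 1) * R) * norm (Complex R pi - Complex R (-pi))"
    proof (rule has_contour_integral_bound_linepath[OF has_contour_integral_integral[OF ci2]])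
      show "0 \<le> 8 * t * exp ((q - p - 1) * R)" using t0 by simp
      fix x assume "x \<in> closed_segment (Complex R (-pi)) (Complex R pi)"
      hence "Re x = R" by (simp add: closed_segment_same_Re)
      thus "norm (Gf p q t x) \<le> 8 * t * exp ((q - p - 1) * R)"
        by (rule Gf_bound_right[OF p0 pq t0 _ R0 bR(1) bR(2)])
    qed
    thus ?thesis unfolding n2 .
  qed
  have b4: "norm (contour_integral (linepath (Complex (-R) pi) (Complex (-R) (-pi))) (Gf p q t)) \<le> 8 * exp (-(p*R)) * (2*pi)"
  proof -
    have "norm (contour_integral (linepath (Complex (-R) pi) (Complex (-R) (-pi))) (Gf p q t)) \<le> 8 * exp (-(p*R)) * norm (Complex (-R) (-pi) - Complex (-R) pi)"
    proof (rule has_contour_integral_bound_linepath[OF has_contour_integral_integral[OF ci4]])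
      show "0 \<le> 8 * exp (-(p*R))" by simp
      fix x assume "x \<in> closed_segment (Complex (-R) pi) (Complex (-R) (-pi))"
      hence "Re x = -R" by (simp add: closed_segment_same_Re)
      thus "norm (Gf p q t x) \<le> 8 * exp (-(p*R))"
        by (rule Gf_bound_left[OF p0 pq t0 _ R0 bR(3) bR(4)])
    qed
    thus ?thesis unfolding n2 .
  qed
  have "norm (Ev n) \<le> norm (contour_integral (linepath (Complex R (-pi)) (Complex R pi)) (Gf p q t))
      + norm (contour_integral (linepath (Complex (-R) pi) (Complex (-R) (-pi))) (Gf p q t))"
    unfolding Ev_def R_def by (rule norm_triangle_ineq)
  thus ?thesis using b2 b4 unfolding R_def by (simp add: algebra_simps)
qed

lemma Ev_lim: "Ev \<longlonglongrightarrow> 0"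
proof (rule Lim_null_comparison)
  define M where "M = max (ln 2 / p) (max (ln (2*t)) (ln (2/t)))"
  have "eventually (\<lambda>n. M \<le> Rn n) sequentially" using Rn_top by (simp add: filterlim_at_top)
  thus "eventually (\<lambda>n. norm (Ev n) \<le> 2*pi*(8 * t * exp ((q - p - 1) * Rn n)) + 2*pi*(8 * exp (-(p * Rn n)))) sequentially"
    by eventually_elim (rule Ev_bound, simp add: M_def)
  have L1: "(\<lambda>n. exp ((q - p - 1) * Rn n)) \<longlonglongrightarrow> 0"
  proof -
    have "filterlim (\<lambda>n. (q - p - 1) * Rn n) at_bot sequentially"
      by (rule filterlim_tendsto_neg_mult_at_bot[OF tendsto_const _ Rn_top]) (use p0 q1 in simp)
    from filterlim_compose[OF exp_at_bot this] show ?thesis .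
  qed
  have L2: "(\<lambda>n. exp (-(p * Rn n))) \<longlonglongrightarrow> 0"
  proof -
    have "filterlim (\<lambda>n. (-p) * Rn n) at_bot sequentially"
      by (rule filterlim_tendsto_neg_mult_at_bot[OF tendsto_const _ Rn_top]) (use p0 in simp)
    from filterlim_compose[OF exp_at_bot this] show ?thesis by simp
  qed
  have "(\<lambda>n. 2*pi*(8 * t * exp ((q - p - 1) * Rn n)) + 2*pi*(8 * exp (-(p * Rn n)))) \<longlonglongrightarrow> 2*pi*(8*t*0) + 2*pi*(8*0)"
    by (intro tendsto_intros L1 L2)
  thus "(\<lambda>n. 2*pi*(8 * t * exp ((q - p - 1) * Rn n)) + 2*pi*(8 * exp (-(p * Rn n)))) \<longlonglongrightarrow> 0" by simp
qed

lemma Jn_lim1: "Jn \<longlonglongrightarrow> Re (Hc p q (of_real (sv t)))"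
proof -
  have nz: "2*pi*\<i> \<noteq> (0::complex)"
    by (metis complex_i_not_zero mult_eq_0_iff of_real_eq_0_iff pi_neq_zero zero_neq_numeral)
  have eq: "of_real (Jn n) = Hc p q (of_real (sv t)) - Ev n / (2*pi*\<i>)" for n
    using J_eq[of n] nz by (simp add: field_simps)
  have "(\<lambda>n. Ev n / (2*pi*\<i>)) \<longlonglongrightarrow> 0" by (rule tendsto_divide_zero[OF Ev_lim])
  hence "(\<lambda>n. Hc p q (of_real (sv t)) - Ev n / (2*pi*\<i>)) \<longlonglongrightarrow> Hc p q (of_real (sv t)) - 0"
    by (intro tendsto_diff tendsto_const)
  hence "(\<lambda>n. complex_of_real (Jn n)) \<longlonglongrightarrow> Hc p q (of_real (sv t))" unfolding eq by simp
  from tendsto_Re[OF this] show ?thesis by simp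
qed

lemma Jn_lim2: "Jn \<longlonglongrightarrow> (LBINT x:{0<..}. kernel_pq p q t x)"
proof -
  note ki = kernel_integrable[OF p0 pq q1 t0]
  have ein: "einterval 0 \<infinity> = {0::real<..}" by (auto simp: einterval_def)
  have mono: "Rn m \<le> Rn n" if "m \<le> n" for m n using that by (simp add: Rn_def)
  have "(\<lambda>i. LBINT x=exp (-(Rn i))..exp (Rn i). kernel_pq p q t x) \<longlonglongrightarrow> (LBINT x=0..\<infinity>. kernel_pq p q t x)"
  proof (rule interval_integral_Icc_approx_integrable)
    show "(0::ereal) < \<infinity>" by simp
    show "einterval 0 \<infinity> = (\<Union>i. {exp (-(Rn i))..exp (Rn i)})"
    proof
      show "einterval 0 \<infinity> \<subseteq> (\<Union>i. {exp (-(Rn i))..exp (Rn i)})"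
      proof
        fix x :: real assume "x \<in> einterval 0 \<infinity>"
        hence x0: "0 < x" by (simp add: ein)
        obtain n :: nat where n: "\<bar>ln x\<bar> \<le> real n" using real_arch_simple by blast
        have "\<bar>ln x\<bar> \<le> Rn n" using n by (simp add: Rn_def)
        hence "-(Rn n) \<le> ln x" "ln x \<le> Rn n" by linarith+
        hence "exp (-(Rn n)) \<le> exp (ln x)" "exp (ln x) \<le> exp (Rn n)" by simp_all
        hence "x \<in> {exp (-(Rn n))..exp (Rn n)}" using x0 by simp
        thus "x \<in> (\<Union>i. {exp (-(Rn i))..exp (Rn i)})" by blast
      qed
      show "(\<Union>i. {exp (-(Rn i))..exp (Rn i)}) \<subseteq> einterval 0 \<infinity>"
        unfolding ein by (auto intro: less_le_trans[OF exp_gt_zero])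
    qed
    show "incseq (\<lambda>i. exp (Rn i))" by (rule incseq_SucI) (simp add: Rn_def)
    show "decseq (\<lambda>i. exp (-(Rn i)))" by (rule decseq_SucI) (simp add: Rn_def)
    show "exp (-(Rn i)) < exp (Rn i)" for i using Rn_ge(2)[of i] by simp
    show "0 < ereal (exp (-(Rn i)))" for i by simp
    show "ereal (exp (Rn i)) < \<infinity>" for i by simp
    have L2: "(\<lambda>n. exp (-(Rn n))) \<longlonglongrightarrow> 0"
    proof -
      have "filterlim (\<lambda>n. (-1) * Rn n) at_bot sequentially"
        by (rule filterlim_tendsto_neg_mult_at_bot[OF tendsto_const _ Rn_top]) simp
      from filterlim_compose[OF exp_at_bot this] show ?thesis by simp
    qed
    show "(\<lambda>i. ereal (exp (-(Rn i)))) \<longlonglongrightarrow> 0"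
      using tendsto_ereal[OF L2] by (simp add: zero_ereal_def)
    have "filterlim (\<lambda>i. exp (Rn i)) at_top sequentially"
      by (rule filterlim_compose[OF exp_at_top Rn_top])
    thus "(\<lambda>i. ereal (exp (Rn i))) \<longlonglongrightarrow> \<infinity>" by (simp add: tendsto_PInfty_eq_at_top)
    show "set_integrable lborel (einterval 0 \<infinity>) (kernel_pq p q t)" unfolding ein by (rule ki)
  qed
  moreover have "(LBINT x=0..\<infinity>. kernel_pq p q t x) = (LBINT x:{0<..}. kernel_pq p q t x)"
    by (subst interval_lebesgue_integral_le_eq) (simp_all add: ein)
  moreover have "(LBINT x=exp (-(Rn i))..exp (Rn i). kernel_pq p q t x) = Jn i" for i
  proof -
    have "set_integrable lborel {exp (-(Rn i))..exp (Rn i)} (kernel_pq p q t)"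
      by (rule set_integrable_subset[OF ki]) (auto intro: less_le_trans[OF exp_gt_zero])
    thus ?thesis unfolding Jn_def using Rn_ge(2)[of i]
      by (subst interval_integral_eq_integral) simp_all
  qed
  ultimately show ?thesis by simp
qed

lemma final: "fpq p q t = p / q + (p / q) * (LBINT l:{0<..}. kernel_pq p q t l)"
proof -
  have "(LBINT x:{0<..}. kernel_pq p q t x) = Re (Hc p q (of_real (sv t)))"
    using LIMSEQ_unique[OF Jn_lim2 Jn_lim1] .
  thus ?thesis using Hc_value[OF p0 pq q1 t0] by simp
qed

end

theorem mainTheorem2:
  fixes p q t :: real
  assumes "0 < p" "p \<le> q" "q \<le> 1" "0 < t"
  shows "set_integrable lborel {0<..} (kernel_pq p q t) \<and>
         fpq p q t = p / q + (p / q) * (LBINT l:{0<..}. kernel_pq p q t l)"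
  using kernel_integrable[OF assms] final[OF assms] by simp


end
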